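(* Let $k_1<k_2$ be integers with $k_1\ge 3$, and let $n$ be a positive integer. If $\nu_{k_2}(n+k_2-3)=0$, then $\nu_{k_1}(n+k_1-3)=0$.
   Context: For an integer $k\ge 3$ and a positive integer $m$, $\nu_k(m)$ denotes the number of $k$-tuples of integers $(x_1,\dots,x_k)$ with $1\le x_1\le x_2\le\dots\le x_k$ such that $x_1x_2\cdots x_k+x_1+x_2+\dots+x_k=m$. *)

theory Defs
  imports Main
begin

definition nu :: "nat \<Rightarrow> nat \<Rightarrow> nat" where
  "nu k m = card {xs :: nat list. length xs = k \<and> sorted xs \<and> (\<forall>x\<in>set xs. 1 \<le> x)
                    \<and> prod_list xs + sum_list xs = m}"

end

theory Submission
  imports Defs
begin

lemma nu_set_finite:
  "finite {xs :: nat list. length xs = k \<and> sorted xs \<and> (\<forall>x\<in>set xs. 1 \<le> x)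
                    \<and> prod_list xs + sum_list xs = m}" (is "finite ?S")
proof -
  have "?S \<subseteq> {xs. set xs \<subseteq> {..m} \<and> length xs = k}"
  proof
    fix xs assume "xs \<in> ?S"
    hence h: "prod_list xs + sum_list xs = m" "length xs = k" by auto
    have "\<forall>x\<in>set xs. x \<le> m"
    proof
      fix x assume "x \<in> set xs"
      hence "x \<le> sum_list xs" by (simp add: member_le_sum_list)
      thus "x \<le> m" using h by linarith
    qed
    thus "xs \<in> {xs. set xs \<subseteq> {..m} \<and> length xs = k}" using h by auto
  qed
  moreover have "finite {xs. set xs \<subseteq> {..m} \<and> length xs = k}"
    by (rule finite_lists_length_eq) simp
  ultimately show ?thesis by (rule finite_subset)
qed

lemma sum_list_replicate_one: "sum_list (replicate m (1::nat)) = m"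
  by (induct m) simp_all

theorem corollary2:
  fixes k1 k2 n :: nat
  assumes "3 \<le> k1" and "k1 < k2" and "0 < n"
    and "nu k2 (n + k2 - 3) = 0"
  shows "nu k1 (n + k1 - 3) = 0"
proof (rule ccontr)
  assume "nu k1 (n + k1 - 3) \<noteq> 0"
  then obtain xs where xs: "length xs = k1" "sorted xs" "\<forall>x\<in>set xs. 1 \<le> x"
    "prod_list xs + sum_list xs = n + k1 - 3"
  proof -
    have "{xs :: nat list. length xs = k1 \<and> sorted xs \<and> (\<forall>x\<in>set xs. 1 \<le> x)
                    \<and> prod_list xs + sum_list xs = n + k1 - 3} \<noteq> {}"
      using \<open>nu k1 (n + k1 - 3) \<noteq> 0\<close> unfolding nu_def by (metis card.empty)
    thus ?thesis using that by blast
  qed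
  define ys where "ys = replicate (k2 - k1) (1::nat) @ xs"
  have "length ys = k2" using xs assms by (simp add: ys_def)
  moreover have "sorted ys" using xs unfolding ys_def
    by (auto simp: sorted_append)
  moreover have "\<forall>x\<in>set ys. 1 \<le> x" using xs by (auto simp: ys_def)
  moreover have "prod_list ys + sum_list ys = n + k2 - 3"
  proof -
    have "sum_list (replicate (k2 - k1) (1::nat)) = k2 - k1"
      using sum_list_replicate_one by blast
    thus ?thesis using xs assms by (simp add: ys_def)
  qed
  ultimately have "ys \<in> {xs :: nat list. length xs = k2 \<and> sorted xs \<and> (\<forall>x\<in>set xs. 1 \<le> x)
                    \<and> prod_list xs + sum_list xs = n + k2 - 3}" by blast
  hence "nu k2 (n + k2 - 3) \<noteq> 0" unfolding nu_def
    using nu_set_finite[of k2 "n + k2 - 3"] card_0_eq by blast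
  thus False using assms by simp
qed

end
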